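(* Let $\phi_1,\dots,\phi_N$ be random features drawn from a distribution with mean $\mu_\phi$, and set $\Delta_\phi := \max_{\phi} \|\phi-\mu_\phi\|_2$, the maximum taken over the distribution's support. Let $a_1,\dots,a_N$ be real parameters with $a_i \in [\alpha,\beta]$ for all $i$, where $0<\alpha<\beta$ (any sign having been absorbed into $\phi_i$). Consider the network $\Phi = \sum_{i=1}^N a_i \phi_i$ and write $\xi := \beta-\alpha$. Suppose $\|\phi_i\|_2 \le \delta$ for every $i$. Fix $P \subseteq \{1,\dots,N\}$ with $|P| = M < N$ and define the pruned network $\Phi_M := \sum_{i \notin P} a_i \phi_i$ and the renormalized pruned network $\widehat\Phi_M := \frac{N}{N-M}\Phi_M$. Then $$\|\Phi - \widehat\Phi_M\|_2 \le 2\beta\,\Delta_\phi\, M + \xi(\beta+\alpha)\,\delta\, M/\alpha.$$ Consequently $\|\Phi - \widehat\Phi_M\|_2 = O(\Delta_\phi + \xi)$ as $\Delta_\phi + \xi \to 0$, so the error tends to $0$ as the random variables $\phi_i$ and $a_i$ concentrate.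
   Context: The network is modeled as a linear combination of features: for an input $x$, $\Phi(x) = \sum_i a_i \phi_i(x)$, where $\phi_i$ is a feature (embedding) and $a_i$ is a parameter. All norms are $2$-norms. "Pruning" sets the $M$ parameters indexed by $P$ to zero. Those indices need not be the ones with the smallest $a_i$. Renormalization then rescales the remaining network by $N/(N-M)$, where $N$ is the number of nonzero parameters before pruning. *)

theory Defs
  imports "HOL-Probability.Probability"
begin

definition measure_support :: "'a::metric_space measure \<Rightarrow> 'a set" where
  "measure_support D = {x. \<forall>e>0. emeasure D (ball x e) > 0}"

definition max_dev :: "'a::euclidean_space measure \<Rightarrow> real" where
  "max_dev D = (SUP x\<in>measure_support D. norm (x - integral\<^sup>L D (\<lambda>y. y)))"

end

theory Submission
  imports Defs
begin

theorem theorem1: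
  fixes D :: "'a::euclidean_space measure"
    and phi :: "nat \<Rightarrow> 'a" and a :: "nat \<Rightarrow> real"
    and alpha beta delta :: real and N M :: nat and P :: "nat set"
  assumes "prob_space D"
    and "sets D = sets borel"
    and "integrable D (\<lambda>y. y)"
    and "bounded (measure_support D)"
    and "\<And>i. i \<in> {1..N} \<Longrightarrow> phi i \<in> measure_support D"
    and "0 < alpha" and "alpha < beta"
    and "\<And>i. i \<in> {1..N} \<Longrightarrow> a i \<in> {alpha..beta}"
    and "\<And>i. i \<in> {1..N} \<Longrightarrow> norm (phi i) \<le> delta"
    and "P \<subseteq> {1..N}" and "card P = M" and "M < N"
  shows "norm ((\<Sum>i\<in>{1..N}. a i *\<^sub>R phi i)
               - (real N / real (N - M)) *\<^sub>R (\<Sum>i\<in>{1..N} - P. a i *\<^sub>R phi i))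
         \<le> 2 * beta * max_dev D * real M
           + (beta - alpha) * (beta + alpha) * delta * real M / alpha"
proof -
  define m where "m = integral\<^sup>L D (\<lambda>y. y)"
  define Dv where "Dv = max_dev D"
  define Q where "Q = {1..N} - P"
  define r where "r = real M / real (N - M)"
  define A where "A = (\<Sum>i\<in>P. a i)"
  define B where "B = (\<Sum>i\<in>Q. a i)"
  have fP: "finite P" using assms(10) finite_subset by blast
  have fQ: "finite Q" unfolding Q_def by simp
  have cQ: "card Q = N - M" unfolding Q_def using assms(10,11) fP
    by (simp add: card_Diff_subset)
  have QN: "Q \<subseteq> {1..N}" unfolding Q_def by auto
  have dev: "norm (phi i - m) \<le> Dv" if "i \<in> {1..N}" for i
  proof -
    have bdd: "bdd_above ((\<lambda>x. norm (x - m)) ` measure_support D)"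
    proof -
      obtain c where c: "\<forall>x\<in>measure_support D. norm x \<le> c"
        using assms(4) bounded_iff by blast
      show ?thesis unfolding bdd_above_def
        by (rule exI[of _ "c + norm m"]) (auto intro: order_trans[OF norm_triangle_ineq4] simp: c)
    qed
    show ?thesis unfolding Dv_def max_dev_def m_def[symmetric]
      by (rule cSUP_upper[OF assms(5)[OF that] bdd])
  qed
  have N1: "1 \<in> {1..N}" using assms(12) by auto
  have Dv0: "0 \<le> Dv" using dev[OF N1] norm_ge_zero order_trans by blast
  have d0: "0 \<le> delta" using assms(9)[OF N1] norm_ge_zero order_trans by blast
  have Alo: "real M * alpha \<le> A"
  proof -
    have "(\<Sum>i\<in>P. alpha) \<le> (\<Sum>i\<in>P. a i)" using assms(8,10) by (intro sum_mono) auto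
    thus ?thesis using assms(11) by (simp add: A_def)
  qed
  have Ahi: "A \<le> real M * beta"
  proof -
    have "(\<Sum>i\<in>P. a i) \<le> (\<Sum>i\<in>P. beta)" using assms(8,10) by (intro sum_mono) auto
    thus ?thesis using assms(11) by (simp add: A_def)
  qed
  have Blo: "real (N - M) * alpha \<le> B"
  proof -
    have "(\<Sum>i\<in>Q. alpha) \<le> (\<Sum>i\<in>Q. a i)" using assms(8) QN by (intro sum_mono) auto
    thus ?thesis using cQ by (simp add: B_def)
  qed
  have Bhi: "B \<le> real (N - M) * beta"
  proof -
    have "(\<Sum>i\<in>Q. a i) \<le> (\<Sum>i\<in>Q. beta)" using assms(8) QN by (intro sum_mono) auto
    thus ?thesis using cQ by (simp add: B_def)
  qed
  have NM: "real (N - M) > 0" using assms(12) by simp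
  have r0: "r \<ge> 0" unfolding r_def by simp
  have rBlo: "real M * alpha \<le> r * B"
  proof -
    have "r * (real (N - M) * alpha) \<le> r * B" using Blo r0 by (rule mult_left_mono)
    thus ?thesis unfolding r_def using NM by simp
  qed
  have rBhi: "r * B \<le> real M * beta"
  proof -
    have "r * B \<le> r * (real (N - M) * beta)" using Bhi r0 by (rule mult_left_mono)
    thus ?thesis unfolding r_def using NM by simp
  qed
  define X where "X = (\<Sum>i\<in>P. a i *\<^sub>R (phi i - m))"
  define Y where "Y = (\<Sum>i\<in>Q. a i *\<^sub>R (phi i - m))"
  have nX: "norm X \<le> A * Dv" unfolding X_def A_def sum_distrib_right
    apply (rule order_trans[OF norm_sum], rule sum_mono)
  proof -
    fix i assume i: "i \<in> P"
    hence iN: "i \<in> {1..N}" using assms(10) by auto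
    have "0 \<le> a i" using assms(8)[OF iN] assms(6) by auto
    thus "norm (a i *\<^sub>R (phi i - m)) \<le> a i * Dv" using dev[OF iN] by (simp add: mult_left_mono)
  qed
  have nY: "norm Y \<le> B * Dv" unfolding Y_def B_def sum_distrib_right
    apply (rule order_trans[OF norm_sum], rule sum_mono)
  proof -
    fix i assume i: "i \<in> Q"
    hence iN: "i \<in> {1..N}" using QN by auto
    have "0 \<le> a i" using assms(8)[OF iN] assms(6) by auto
    thus "norm (a i *\<^sub>R (phi i - m)) \<le> a i * Dv" using dev[OF iN] by (simp add: mult_left_mono)
  qed
  have sP: "(\<Sum>i\<in>P. a i *\<^sub>R phi i) = X + A *\<^sub>R m"
    unfolding X_def A_def by (simp add: scaleR_diff_right sum_subtractf scaleR_sum_left)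
  have sQ: "(\<Sum>i\<in>Q. a i *\<^sub>R phi i) = Y + B *\<^sub>R m"
    unfolding Y_def B_def by (simp add: scaleR_diff_right sum_subtractf scaleR_sum_left)
  have split: "(\<Sum>i\<in>{1..N}. a i *\<^sub>R phi i) = (\<Sum>i\<in>P. a i *\<^sub>R phi i) + (\<Sum>i\<in>Q. a i *\<^sub>R phi i)"
    unfolding Q_def using assms(10) by (metis finite_atLeastAtMost sum.subset_diff add.commute)
  have coef: "real N / real (N - M) = 1 + r" unfolding r_def using NM assms(12)
    by (simp add: field_simps)
  have E: "(\<Sum>i\<in>{1..N}. a i *\<^sub>R phi i) - (real N / real (N - M)) *\<^sub>R (\<Sum>i\<in>{1..N} - P. a i *\<^sub>R phi i)
      = X - r *\<^sub>R Y + (A - r * B) *\<^sub>R phi 1 - (A - r * B) *\<^sub>R (phi 1 - m)"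
    unfolding split coef Q_def[symmetric] sP sQ
    by (simp add: algebra_simps)
  have "norm (X - r *\<^sub>R Y + (A - r * B) *\<^sub>R phi 1 - (A - r * B) *\<^sub>R (phi 1 - m))
      \<le> norm X + r * norm Y + \<bar>A - r * B\<bar> * norm (phi 1) + \<bar>A - r * B\<bar> * norm (phi 1 - m)"
    using r0 by (smt (verit) norm_scaleR norm_triangle_ineq4 norm_triangle_ineq abs_of_nonneg)
  also have "\<dots> \<le> A * Dv + r * (B * Dv) + \<bar>A - r * B\<bar> * delta + \<bar>A - r * B\<bar> * Dv"
    using nX nY r0 assms(9)[OF N1] dev[OF N1]
    by (intro add_mono mult_left_mono) auto
  also have "\<dots> \<le> 2 * beta * Dv * real M + (beta - alpha) * delta * real M"
  proof -
    have ab: "\<bar>A - r * B\<bar> \<le> (beta - alpha) * real M" using Alo Ahi rBlo rBhi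
      by (simp add: algebra_simps abs_le_iff)
    have "A * Dv + r * (B * Dv) + \<bar>A - r * B\<bar> * Dv \<le> 2 * beta * Dv * real M"
    proof -
      have "A + r * B + \<bar>A - r * B\<bar> \<le> 2 * beta * real M" using Ahi rBhi by (simp add: abs_if algebra_simps)
      from mult_right_mono[OF this Dv0] show ?thesis by (simp add: algebra_simps)
    qed
    moreover have "\<bar>A - r * B\<bar> * delta \<le> (beta - alpha) * delta * real M"
      using mult_right_mono[OF ab d0] by (simp add: algebra_simps)
    ultimately show ?thesis by linarith
  qed
  also have "\<dots> \<le> 2 * beta * max_dev D * real M
           + (beta - alpha) * (beta + alpha) * delta * real M / alpha"
  proof -
    have k: "0 \<le> (beta - alpha) * delta * real M" using assms(7) d0 by simp
    have "(beta - alpha) * delta * real M * 1 \<le> (beta - alpha) * delta * real M * ((beta + alpha) / alpha)"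
      using assms(6,7) by (intro mult_left_mono[OF _ k]) (simp add: field_simps)
    thus ?thesis unfolding Dv_def by (simp add: field_simps)
  qed
  finally show ?thesis using E by simp
qed

end
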